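(* Let $\mathfrak L$ be a left-resolving $\lambda$-graph system over a finite alphabet $\Sigma$ which satisfies condition (I). Then $\mathfrak L$ is essentially free, i.e. for all $m\neq n$ in $\mathbb Z_+$ the set $X_{m,n}=\{x\in X_{\mathfrak L}\mid \sigma_{\mathfrak L}^m(x)=\sigma_{\mathfrak L}^n(x)\}$ has empty interior in $X_{\mathfrak L}$.
   Context: $\mathbb Z_+=\{0,1,2,\dots\}$, $\mathbb N=\{1,2,\dots\}$. A $\lambda$-graph system $\mathfrak L=(V,E,\lambda,\iota)$ over a finite alphabet $\Sigma$ consists of finite nonempty pairwise disjoint vertex sets $V_l$ ($l\in\mathbb Z_+$), $V=\bigcup_l V_l$; finite pairwise disjoint edge sets $E_{l,l+1}$, $E=\bigcup_l E_{l,l+1}$, each $e\in E_{l,l+1}$ having a source $s(e)\in V_l$ and a terminal $t(e)\in V_{l+1}$; a labeling map $\lambda:E\to\Sigma$; and surjections $\iota=\iota_{l,l+1}:V_{l+1}\to V_l$; such that every vertex is the source of some edge, every vertex in $V_l$ with $l\ge1$ is the terminal of some edge, and (local property) for all $l\ge1$, $u\in V_{l-1}$, $v\in V_{l+1}$ there is a label-preserving bijection between $\{e\in E_{l,l+1}: \iota(s(e))=u,\ t(e)=v\}$ and $\{e\in E_{l-1,l}: s(e)=u,\ t(e)=\iota(v)\}$. It is left-resolving if $e,f\in E$, $t(e)=t(f)$, $\lambda(e)=\lambda(f)$ imply $e=f$. $\Omega_{\mathfrak L}=\{(u^l)_{l\in\mathbb Z_+}\in\prod_l V_l: \iota(u^{l+1})=u^l\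 \forall l\}$ with the projective limit topology. $E_{\mathfrak L}$ is the set of $(u,\alpha,w)\in\Omega_{\mathfrak L}\times\Sigma\times\Omega_{\mathfrak L}$ such that for each $l$ there is $e\in E_{l,l+1}$ with $s(e)=u^l$, $t(e)=w^{l+1}$, $\lambda(e)=\alpha$. $X_{\mathfrak L}$ is the set of sequences $(\alpha_i,u_i)_{i\in\mathbb N}\in\prod_{i\in\mathbb N}(\Sigma\times\Omega_{\mathfrak L})$ with $(u_i,\alpha_{i+1},u_{i+1})\in E_{\mathfrak L}$ for all $i\in\mathbb N$ and $(u_0,\alpha_1,u_1)\in E_{\mathfrak L}$ for some $u_0\in\Omega_{\mathfrak L}$, with the relative product topology; $\sigma_{\mathfrak L}((\alpha_i,u_i)_{i\in\mathbb N})=(\alpha_{i+1},u_{i+1})_{i\in\mathbb N}$. Condition (I): for every $l\in\mathbb Z_+$ and $v\in V_l$, the set $\Gamma^+_\infty(v)\subset\Sigma^{\mathbb N}$ of all sequences $(\alpha_1,\alpha_2,\dots)$ for which there are edges $e_{n,n+1}\in E_{n,n+1}$ ($n\ge l$) with $s(e_{l,l+1})=v$, $t(e_{n,n+1})=s(e_{n+1,n+2})$ and $\lambda(e_{n,n+1})=\alpha_{n-l+1}$ for all $n\ge l$, contains at least two distinct sequences. *)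

theory Defs
  imports "HOL-Analysis.Analysis"
begin

text \<open>V l is the vertex set V_l,
 E l is the edge set E_{l,l+1}; src, trg, lab, iota are the source, terminal,
 labeling and iota maps (only their values on V resp. E matter).\<close>

definition lambda_graph_system ::
  "'s set \<Rightarrow> (nat \<Rightarrow> 'v set) \<Rightarrow> (nat \<Rightarrow> 'e set) \<Rightarrow> ('e \<Rightarrow> 'v) \<Rightarrow> ('e \<Rightarrow> 'v)
    \<Rightarrow> ('e \<Rightarrow> 's) \<Rightarrow> ('v \<Rightarrow> 'v) \<Rightarrow> bool" where
  "lambda_graph_system Alph V E src trg lab iota \<longleftrightarrow>
     finite Alph \<and>
     (\<forall>l. finite (V l) \<and> V l \<noteq> {}) \<and>
     (\<forall>l k. l \<noteq> k \<longrightarrow> V l \<inter> V k = {}) \<and>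
     (\<forall>l. finite (E l)) \<and>
     (\<forall>l k. l \<noteq> k \<longrightarrow> E l \<inter> E k = {}) \<and>
     (\<forall>l. \<forall>e\<in>E l. src e \<in> V l \<and> trg e \<in> V (Suc l) \<and> lab e \<in> Alph) \<and>
     (\<forall>l. iota ` V (Suc l) = V l) \<and>
     (\<forall>l. \<forall>v\<in>V l. \<exists>e\<in>E l. src e = v) \<and>
     (\<forall>l. \<forall>v\<in>V (Suc l). \<exists>e\<in>E l. trg e = v) \<and>
     (\<forall>l\<ge>1. \<forall>u\<in>V (l - 1). \<forall>v\<in>V (Suc l).
        \<exists>f. bij_betw f {e\<in>E l. iota (src e) = u \<and> trg e = v}
                        {e\<in>E (l - 1). src e = u \<and> trg e = iota v}
            \<and> (\<forall>e\<in>{e\<in>E l. iota (src e) = u \<and> trg e = v}. lab (f e) = lab e))"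

definition left_resolving :: "(nat \<Rightarrow> 'e set) \<Rightarrow> ('e \<Rightarrow> 'v) \<Rightarrow> ('e \<Rightarrow> 's) \<Rightarrow> bool" where
  "left_resolving E trg lab \<longleftrightarrow>
     (\<forall>e\<in>(\<Union>l. E l). \<forall>f\<in>(\<Union>l. E l). trg e = trg f \<and> lab e = lab f \<longrightarrow> e = f)"

text \<open>Gamma^+_infty(v) for v in V_l; sequences are indexed from 0
 (alpha 0 is alpha_1 of the paper).\<close>
definition Gamma_plus_infty ::
  "(nat \<Rightarrow> 'e set) \<Rightarrow> ('e \<Rightarrow> 'v) \<Rightarrow> ('e \<Rightarrow> 'v) \<Rightarrow> ('e \<Rightarrow> 's) \<Rightarrow> nat \<Rightarrow> 'v \<Rightarrow> (nat \<Rightarrow> 's) set" where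
  "Gamma_plus_infty E src trg lab l v =
     {\<alpha>. \<exists>p::nat \<Rightarrow> 'e. (\<forall>n. p n \<in> E (l + n)) \<and> src (p 0) = v \<and>
            (\<forall>n. trg (p n) = src (p (Suc n))) \<and> (\<forall>n. lab (p n) = \<alpha> n)}"

definition condition_I ::
  "(nat \<Rightarrow> 'v set) \<Rightarrow> (nat \<Rightarrow> 'e set) \<Rightarrow> ('e \<Rightarrow> 'v) \<Rightarrow> ('e \<Rightarrow> 'v) \<Rightarrow> ('e \<Rightarrow> 's) \<Rightarrow> bool" where
  "condition_I V E src trg lab \<longleftrightarrow>
     (\<forall>l. \<forall>v\<in>V l. \<exists>a\<in>Gamma_plus_infty E src trg lab l v.
                    \<exists>b\<in>Gamma_plus_infty E src trg lab l v. a \<noteq> b)"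

definition Omega_L :: "(nat \<Rightarrow> 'v set) \<Rightarrow> ('v \<Rightarrow> 'v) \<Rightarrow> (nat \<Rightarrow> 'v) set" where
  "Omega_L V iota = {u. (\<forall>l. u l \<in> V l) \<and> (\<forall>l. iota (u (Suc l)) = u l)}"

text \<open>Projective limit topology = subspace of the product of the discrete V_l.\<close>
definition Omega_top :: "(nat \<Rightarrow> 'v set) \<Rightarrow> ('v \<Rightarrow> 'v) \<Rightarrow> (nat \<Rightarrow> 'v) topology" where
  "Omega_top V iota =
     subtopology (product_topology (\<lambda>l. discrete_topology (V l)) UNIV) (Omega_L V iota)"

definition E_L ::
  "'s set \<Rightarrow> (nat \<Rightarrow> 'v set) \<Rightarrow> (nat \<Rightarrow> 'e set) \<Rightarrow> ('e \<Rightarrow> 'v) \<Rightarrow> ('e \<Rightarrow> 'v)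
    \<Rightarrow> ('e \<Rightarrow> 's) \<Rightarrow> ('v \<Rightarrow> 'v) \<Rightarrow> ((nat \<Rightarrow> 'v) \<times> 's \<times> (nat \<Rightarrow> 'v)) set" where
  "E_L Alph V E src trg lab iota =
     {(u, \<alpha>, w). u \<in> Omega_L V iota \<and> \<alpha> \<in> Alph \<and> w \<in> Omega_L V iota \<and>
        (\<forall>l. \<exists>e\<in>E l. src e = u l \<and> trg e = w (Suc l) \<and> lab e = \<alpha>)}"

text \<open>X_L: the paper's sequence (alpha_i, u_i)_{i>=1} is represented by
 x :: nat => _ with x k = (alpha_{k+1}, u_{k+1}).\<close>
definition X_L ::
  "'s set \<Rightarrow> (nat \<Rightarrow> 'v set) \<Rightarrow> (nat \<Rightarrow> 'e set) \<Rightarrow> ('e \<Rightarrow> 'v) \<Rightarrow> ('e \<Rightarrow> 'v)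
    \<Rightarrow> ('e \<Rightarrow> 's) \<Rightarrow> ('v \<Rightarrow> 'v) \<Rightarrow> (nat \<Rightarrow> 's \<times> (nat \<Rightarrow> 'v)) set" where
  "X_L Alph V E src trg lab iota =
     {x. (\<forall>k. fst (x k) \<in> Alph \<and> snd (x k) \<in> Omega_L V iota) \<and>
         (\<forall>k. (snd (x k), fst (x (Suc k)), snd (x (Suc k))) \<in> E_L Alph V E src trg lab iota) \<and>
         (\<exists>u0\<in>Omega_L V iota. (u0, fst (x 0), snd (x 0)) \<in> E_L Alph V E src trg lab iota)}"

definition X_top ::
  "'s set \<Rightarrow> (nat \<Rightarrow> 'v set) \<Rightarrow> (nat \<Rightarrow> 'e set) \<Rightarrow> ('e \<Rightarrow> 'v) \<Rightarrow> ('e \<Rightarrow> 'v)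
    \<Rightarrow> ('e \<Rightarrow> 's) \<Rightarrow> ('v \<Rightarrow> 'v) \<Rightarrow> (nat \<Rightarrow> 's \<times> (nat \<Rightarrow> 'v)) topology" where
  "X_top Alph V E src trg lab iota =
     subtopology
       (product_topology (\<lambda>k. prod_topology (discrete_topology Alph) (Omega_top V iota)) UNIV)
       (X_L Alph V E src trg lab iota)"

definition sigma_L :: "(nat \<Rightarrow> 'a) \<Rightarrow> (nat \<Rightarrow> 'a)" where
  "sigma_L x = (\<lambda>k. x (Suc k))"

definition X_mn ::
  "'s set \<Rightarrow> (nat \<Rightarrow> 'v set) \<Rightarrow> (nat \<Rightarrow> 'e set) \<Rightarrow> ('e \<Rightarrow> 'v) \<Rightarrow> ('e \<Rightarrow> 'v)
    \<Rightarrow> ('e \<Rightarrow> 's) \<Rightarrow> ('v \<Rightarrow> 'v) \<Rightarrow> nat \<Rightarrow> nat \<Rightarrow> (nat \<Rightarrow> 's \<times> (nat \<Rightarrow> 'v)) set" where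
  "X_mn Alph V E src trg lab iota m n =
     {x \<in> X_L Alph V E src trg lab iota. (sigma_L ^^ m) x = (sigma_L ^^ n) x}"

definition essentially_free ::
  "'s set \<Rightarrow> (nat \<Rightarrow> 'v set) \<Rightarrow> (nat \<Rightarrow> 'e set) \<Rightarrow> ('e \<Rightarrow> 'v) \<Rightarrow> ('e \<Rightarrow> 'v)
    \<Rightarrow> ('e \<Rightarrow> 's) \<Rightarrow> ('v \<Rightarrow> 'v) \<Rightarrow> bool" where
  "essentially_free Alph V E src trg lab iota \<longleftrightarrow>
     (\<forall>m n. m \<noteq> n \<longrightarrow>
        (X_top Alph V E src trg lab iota) interior_of (X_mn Alph V E src trg lab iota m n) = {})"

end

theory Submission
  imports Defs
begin


lemma pigeon_mono:
  assumes fin: "finite C" and ex: "\<And>k. \<exists>b\<in>C. P k b"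
    and mono: "\<And>k b. P (Suc k) b \<Longrightarrow> P k b"
  shows "\<exists>b\<in>C. \<forall>k. P k b"
proof (rule ccontr)
  assume "\<not> ?thesis"
  then have "\<forall>b\<in>C. \<exists>k. \<not> P k b" by blast
  then obtain g where g: "\<And>b. b \<in> C \<Longrightarrow> \<not> P (g b) b" by metis
  define K where "K = Max (g ` C)"
  obtain b where b: "b \<in> C" "P K b" using ex by blast
  have "g b \<le> K" unfolding K_def using fin b(1) by simp
  have monok: "P k' b' \<Longrightarrow> k \<le> k' \<Longrightarrow> P k b'" for k k' b'
  proof (induction k' arbitrary: k)
    case 0 then show ?case by simp
  next
    case (Suc k')
    show ?case
    proof (cases "k = Suc k'")
      case True then show ?thesis using Suc.prems by simp
    next
      case False then have "k \<le> k'" using Suc.prems by simp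
      then show ?thesis using Suc.IH mono Suc.prems(1) by blast
    qed
  qed
  have "P (g b) b" using monok[OF b(2) \<open>g b \<le> K\<close>] .
  with g[OF b(1)] show False by simp
qed

lemma koenig:
  fixes S :: "nat \<Rightarrow> 'a set" and f :: "nat \<Rightarrow> 'a \<Rightarrow> 'a"
  assumes fin: "\<And>n. finite (S n)" and ne: "\<And>n. S n \<noteq> {}"
    and maps: "\<And>n z. z \<in> S (Suc n) \<Longrightarrow> f n z \<in> S n"
  shows "\<exists>t. \<forall>n. t n \<in> S n \<and> f n (t (Suc n)) = t n"
proof -
  define down where "down n k = rec_nat (\<lambda>z. z) (\<lambda>k h z. h (f (n+k) z)) k" for n k
  have down0: "down n 0 z = z" for n z by (simp add: down_def)
  have downS: "down n (Suc k) z = down n k (f (n+k) z)" for n k z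
  proof (induction k arbitrary: z)
    case 0 then show ?case by (simp add: down_def)
  next
    case (Suc k) then show ?case by (simp add: down_def)
  qed
  have downS': "down n (Suc k) z = f n (down (Suc n) k z)" for n k z
  proof (induction k arbitrary: z)
    case 0 then show ?case by (simp add: down0 downS)
  next
    case (Suc k)
    have "down n (Suc (Suc k)) z = down n (Suc k) (f (n + Suc k) z)" by (simp add: downS)
    also have "\<dots> = f n (down (Suc n) k (f (n + Suc k) z))" by (rule Suc)
    also have "\<dots> = f n (down (Suc n) (Suc k) z)" by (simp add: downS)
    finally show ?case .
  qed
  have downS_in: "z \<in> S (n+k) \<Longrightarrow> down n k z \<in> S n" for n k z
  proof (induction k arbitrary: z)
    case 0 then show ?case by (simp add: down0)
  next
    case (Suc k) then show ?case using maps[where n="n+k" and z=z] by (simp add: downS)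
  qed
  define R where "R n k a \<longleftrightarrow> (\<exists>z\<in>S (n+k). down n k z = a)" for n k a
  have Rmono: "R n (Suc k) a \<Longrightarrow> R n k a" for n k a
  proof -
    assume "R n (Suc k) a"
    then obtain z where z: "z \<in> S (Suc (n+k))" "down n (Suc k) z = a" unfolding R_def by auto
    have "f (n+k) z \<in> S (n+k)" using maps[where n="n+k" and z=z] z(1) by simp
    moreover have "down n k (f (n+k) z) = a" using z(2) by (simp add: downS)
    ultimately show ?thesis unfolding R_def by blast
  qed
  define good where "good n a \<longleftrightarrow> a \<in> S n \<and> (\<forall>k. R n k a)" for n a
  have ex_good: "\<exists>a. good n a" for n
  proof -
    have "\<exists>b\<in>S n. R n k b" for k
    proof -
      obtain z where "z \<in> S (n+k)" using ne by blast
      then show ?thesis unfolding R_def using downS_in by blast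
    qed
    then obtain b where "b \<in> S n" "\<forall>k. R n k b"
      using pigeon_mono[of "S n" "\<lambda>k b. R n k b", OF fin] Rmono by blast
    then show ?thesis unfolding good_def by blast
  qed
  have step: "good n a \<Longrightarrow> \<exists>b. good (Suc n) b \<and> f n b = a" for n a
  proof -
    assume g: "good n a"
    define C where "C = {b\<in>S (Suc n). f n b = a}"
    have "\<exists>b\<in>C. R (Suc n) k b" for k
    proof -
      from g have "R n (Suc k) a" unfolding good_def by blast
      then obtain z where z: "z \<in> S (n + Suc k)" "down n (Suc k) z = a" unfolding R_def by blast
      have zz: "z \<in> S (Suc n + k)" using z(1) by simp
      have "down (Suc n) k z \<in> C" unfolding C_def using downS_in[OF zz] z(2) downS' by simp
      moreover have "R (Suc n) k (down (Suc n) k z)" unfolding R_def using zz by blast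
      ultimately show ?thesis by blast
    qed
    moreover have "finite C" unfolding C_def using fin[of "Suc n"] by simp
    ultimately obtain b where "b \<in> C" "\<forall>k. R (Suc n) k b"
      using pigeon_mono[of C "\<lambda>k b. R (Suc n) k b"] Rmono by blast
    then show ?thesis unfolding good_def C_def by blast
  qed
  define t where "t = rec_nat (SOME a. good 0 a) (\<lambda>n tn. SOME b. good (Suc n) b \<and> f n b = tn)"
  have t0: "t 0 = (SOME a. good 0 a)" and tS: "t (Suc n) = (SOME b. good (Suc n) b \<and> f n b = t n)" for n
    by (simp_all add: t_def)
  have tg: "good n (t n)" for n
  proof (induction n)
    case 0 then show ?case unfolding t0 by (rule someI_ex[OF ex_good])
  next
    case (Suc n)
    have "good (Suc n) (SOME b. good (Suc n) b \<and> f n b = t n) \<and> f n (SOME b. good (Suc n) b \<and> f n b = t n) = t n"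
      by (rule someI_ex[OF step[OF Suc]])
    then show ?case unfolding tS by blast
  qed
  have "f n (t (Suc n)) = t n" for n
  proof -
    have "good (Suc n) (SOME b. good (Suc n) b \<and> f n b = t n) \<and> f n (SOME b. good (Suc n) b \<and> f n b = t n) = t n"
      by (rule someI_ex[OF step[OF tg[of n]]])
    then show ?thesis unfolding tS by blast
  qed
  then show ?thesis using tg unfolding good_def by blast
qed



locale lgs =
  fixes Alph :: "'s set" and V :: "nat \<Rightarrow> 'v set" and E :: "nat \<Rightarrow> 'e set"
    and src trg :: "'e \<Rightarrow> 'v" and lab :: "'e \<Rightarrow> 's" and iota :: "'v \<Rightarrow> 'v"
  assumes L: "lambda_graph_system Alph V E src trg lab iota"
    and LR: "left_resolving E trg lab"
begin

lemma Lconj: "finite Alph \<and>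
     (\<forall>l. finite (V l) \<and> V l \<noteq> {}) \<and>
     (\<forall>l k. l \<noteq> k \<longrightarrow> V l \<inter> V k = {}) \<and>
     (\<forall>l. finite (E l)) \<and>
     (\<forall>l k. l \<noteq> k \<longrightarrow> E l \<inter> E k = {}) \<and>
     (\<forall>l. \<forall>e\<in>E l. src e \<in> V l \<and> trg e \<in> V (Suc l) \<and> lab e \<in> Alph) \<and>
     (\<forall>l. iota ` V (Suc l) = V l) \<and>
     (\<forall>l. \<forall>v\<in>V l. \<exists>e\<in>E l. src e = v) \<and>
     (\<forall>l. \<forall>v\<in>V (Suc l). \<exists>e\<in>E l. trg e = v) \<and>
     (\<forall>l\<ge>1. \<forall>u\<in>V (l - 1). \<forall>v\<in>V (Suc l).
        \<exists>f. bij_betw f {e\<in>E l. iota (src e) = u \<and> trg e = v}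
                        {e\<in>E (l - 1). src e = u \<and> trg e = iota v}
            \<and> (\<forall>e\<in>{e\<in>E l. iota (src e) = u \<and> trg e = v}. lab (f e) = lab e))"
  using L unfolding lambda_graph_system_def .

lemma finV: "finite (V l)" using Lconj by (elim conjE) simp
lemma edgeprops: "e \<in> E l \<Longrightarrow> src e \<in> V l \<and> trg e \<in> V (Suc l) \<and> lab e \<in> Alph"
proof -
  assume e: "e \<in> E l"
  have H: "\<forall>l. \<forall>e\<in>E l. src e \<in> V l \<and> trg e \<in> V (Suc l) \<and> lab e \<in> Alph" using Lconj by (elim conjE) assumption
  from H[rule_format, OF e] show ?thesis .
qed
lemma srcV: "e \<in> E l \<Longrightarrow> src e \<in> V l" using edgeprops by blast
lemma trgV: "e \<in> E l \<Longrightarrow> trg e \<in> V (Suc l)" using edgeprops by blast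
lemma labA: "e \<in> E l \<Longrightarrow> lab e \<in> Alph" using edgeprops by blast
lemma iota_img: "iota ` V (Suc l) = V l"
proof -
  have H: "\<forall>l. iota ` V (Suc l) = V l" using Lconj by (elim conjE) assumption
  from H[rule_format] show ?thesis .
qed
lemma iotaV: "v \<in> V (Suc l) \<Longrightarrow> iota v \<in> V l" using iota_img by blast
lemma iota_surj: "v \<in> V l \<Longrightarrow> \<exists>w\<in>V (Suc l). iota w = v"
proof -
  assume "v \<in> V l"
  then have "v \<in> iota ` V (Suc l)" by (simp add: iota_img)
  then obtain w where "w \<in> V (Suc l)" "v = iota w" by (rule imageE)
  then show ?thesis by blast
qed
lemma local_prop: "l \<ge> 1 \<Longrightarrow> u \<in> V (l - 1) \<Longrightarrow> v \<in> V (Suc l) \<Longrightarrow>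
        \<exists>f. bij_betw f {e\<in>E l. iota (src e) = u \<and> trg e = v}
                        {e\<in>E (l - 1). src e = u \<and> trg e = iota v}
            \<and> (\<forall>e\<in>{e\<in>E l. iota (src e) = u \<and> trg e = v}. lab (f e) = lab e)"
proof -
  assume a: "l \<ge> 1" "u \<in> V (l - 1)" "v \<in> V (Suc l)"
  have "\<forall>l\<ge>1. \<forall>u\<in>V (l - 1). \<forall>v\<in>V (Suc l).
        \<exists>f. bij_betw f {e\<in>E l. iota (src e) = u \<and> trg e = v}
                        {e\<in>E (l - 1). src e = u \<and> trg e = iota v}
            \<and> (\<forall>e\<in>{e\<in>E l. iota (src e) = u \<and> trg e = v}. lab (f e) = lab e)"
    using Lconj by (elim conjE) assumption
  from this[rule_format, OF a] show ?thesis .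
qed
lemma lr: "e \<in> E l \<Longrightarrow> e' \<in> E l' \<Longrightarrow> trg e = trg e' \<Longrightarrow> lab e = lab e' \<Longrightarrow> e = e'"
  using LR unfolding left_resolving_def by blast

lemma one_le_Suc: "(1::nat) \<le> Suc l" by simp

lemma down1:
  assumes "e \<in> E (Suc l)"
  shows "\<exists>e'\<in>E l. src e' = iota (src e) \<and> trg e' = iota (trg e) \<and> lab e' = lab e"
proof -
  have u: "iota (src e) \<in> V (Suc l - 1)" using iotaV[OF srcV[OF assms]] by simp
  define A where "A = {e'\<in>E (Suc l). iota (src e') = iota (src e) \<and> trg e' = trg e}"
  define B where "B = {e'\<in>E (Suc l - 1). src e' = iota (src e) \<and> trg e' = iota (trg e)}"
  have "\<exists>f. bij_betw f A B \<and> (\<forall>e'\<in>A. lab (f e') = lab e')"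
    unfolding A_def B_def by (rule local_prop[of "Suc l", OF one_le_Suc u trgV[OF assms]])
  then obtain f where f: "bij_betw f A B \<and> (\<forall>e'\<in>A. lab (f e') = lab e')" by (elim exE)
  have ein: "e \<in> A" unfolding A_def using assms by simp
  have "f e \<in> B" using bij_betw_apply[OF conjunct1[OF f] ein] .
  moreover have "lab (f e) = lab e" using conjunct2[OF f] ein by (rule bspec)
  ultimately show ?thesis unfolding B_def by auto
qed

lemma up1:
  assumes "e \<in> E l" "t \<in> V (Suc (Suc l))" "iota t = trg e"
  shows "\<exists>e'\<in>E (Suc l). trg e' = t \<and> iota (src e') = src e \<and> lab e' = lab e"
proof -
  have u: "src e \<in> V (Suc l - 1)" using srcV[OF assms(1)] by simp
  define A where "A = {e'\<in>E (Suc l). iota (src e') = src e \<and> trg e' = t}"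
  define B where "B = {e'\<in>E (Suc l - 1). src e' = src e \<and> trg e' = iota t}"
  have "\<exists>f. bij_betw f A B \<and> (\<forall>e'\<in>A. lab (f e') = lab e')"
    unfolding A_def B_def by (rule local_prop[of "Suc l", OF one_le_Suc u assms(2)])
  then obtain f where f: "bij_betw f A B \<and> (\<forall>e'\<in>A. lab (f e') = lab e')" by (elim exE)
  have ein: "e \<in> B" unfolding B_def using assms by simp
  then have "e \<in> f ` A" using conjunct1[OF f] unfolding bij_betw_def by (simp only:)
  then obtain e' where e': "e' \<in> A" "e = f e'" by (rule imageE)
  moreover have "lab (f e') = lab e'" using conjunct2[OF f] e'(1) by (rule bspec)
  ultimately show ?thesis unfolding A_def by auto
qed

lemma downk:
  "e \<in> E (l + k) \<Longrightarrow> \<exists>e'\<in>E l. src e' = (iota ^^ k) (src e) \<and> trg e' = (iota ^^ k) (trg e) \<and> lab e' = lab e"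
proof (induction k arbitrary: e)
  case 0 then show ?case by auto
next
  case (Suc k)
  then have "e \<in> E (Suc (l + k))" by simp
  from down1[OF this] obtain e1 where e1: "e1 \<in> E (l+k)" "src e1 = iota (src e)" "trg e1 = iota (trg e)" "lab e1 = lab e" by blast
  from Suc.IH[OF e1(1)] obtain e' where e': "e' \<in> E l" "src e' = (iota ^^ k) (src e1)"
     "trg e' = (iota ^^ k) (trg e1)" "lab e' = lab e1" by blast
  have "src e' = (iota ^^ Suc k) (src e)" using e'(2) e1(2) by (simp only: funpow_Suc_right o_apply)
  moreover have "trg e' = (iota ^^ Suc k) (trg e)" using e'(3) e1(3) by (simp only: funpow_Suc_right o_apply)
  moreover have "lab e' = lab e" using e'(4) e1(4) by (simp only:)
  ultimately show ?case using e'(1) by blast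
qed

lemma upk:
  "e \<in> E l \<Longrightarrow> t \<in> V (Suc l + k) \<Longrightarrow> (iota ^^ k) t = trg e \<Longrightarrow>
    \<exists>e'\<in>E (l + k). trg e' = t \<and> (iota ^^ k) (src e') = src e \<and> lab e' = lab e"
proof (induction k arbitrary: t)
  case 0 then show ?case by auto
next
  case (Suc k)
  have it: "iota t \<in> V (Suc l + k)" using iotaV Suc.prems(2) by simp
  have "(iota ^^ k) (iota t) = trg e" using Suc.prems(3) by (simp add: funpow_Suc_right del: funpow.simps)
  from Suc.IH[OF Suc.prems(1) it this] obtain e'' where e'': "e'' \<in> E (l+k)" "trg e'' = iota t"
    "(iota ^^ k) (src e'') = src e" "lab e'' = lab e" by blast
  have "t \<in> V (Suc (Suc (l+k)))" using Suc.prems(2) by simp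
  from up1[OF e''(1) this e''(2)[symmetric]] obtain e' where
    e': "e' \<in> E (Suc (l+k))" "trg e' = t" "iota (src e') = src e''" "lab e' = lab e''" by blast
  have "(iota ^^ Suc k) (src e') = (iota ^^ k) (iota (src e'))" by (simp only: funpow_Suc_right o_apply)
  then have c2: "(iota ^^ Suc k) (src e') = src e" using e'(3) e''(3) by (simp only:)
  have c1: "e' \<in> E (l + Suc k)" using e'(1) by simp
  have c3: "lab e' = lab e" using e'(4) e''(4) by (simp only:)
  have "trg e' = t \<and> (iota ^^ Suc k) (src e') = src e \<and> lab e' = lab e" using e'(2) c2 c3 by (intro conjI)
  then show ?case using c1 by (rule bexI)
qed

lemma iotakV: "v \<in> V (l + k) \<Longrightarrow> (iota ^^ k) v \<in> V l"
proof (induction k arbitrary: v)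
  case 0 then show ?case by simp
next
  case (Suc k)
  have "iota v \<in> V (l + k)" using iotaV[of v "l+k"] Suc.prems by simp
  then have "(iota ^^ k) (iota v) \<in> V l" by (rule Suc.IH)
  then show ?case by (simp only: funpow_Suc_right o_apply)
qed

lemma iotak_surj: "v \<in> V l \<Longrightarrow> \<exists>w\<in>V (l + k). (iota ^^ k) w = v"
proof (induction k)
  case 0 then show ?case by simp
next
  case (Suc k)
  then obtain w where "w \<in> V (l+k)" "(iota ^^ k) w = v" by blast
  moreover obtain w' where w': "w' \<in> V (Suc (l+k))" "iota w' = w" using iota_surj calculation(1) by blast
  ultimately have "(iota ^^ Suc k) w' = v" by (simp only: funpow_Suc_right o_apply)
  moreover have "w' \<in> V (l + Suc k)" using w' by simp
  ultimately show ?case by blast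
qed

definition predE :: "'s \<Rightarrow> 'v \<Rightarrow> 'e" where
  "predE a t = (THE e. e \<in> (\<Union>l. E l) \<and> trg e = t \<and> lab e = a)"

lemma predE_eq:
  assumes e: "e \<in> E l" shows "predE (lab e) (trg e) = e"
  unfolding predE_def
proof (rule the_equality)
  show "e \<in> (\<Union>l. E l) \<and> trg e = trg e \<and> lab e = lab e" using e by blast
  fix e' assume "e' \<in> (\<Union>l. E l) \<and> trg e' = trg e \<and> lab e' = lab e"
  then obtain l' where h: "e' \<in> E l'" "trg e' = trg e" "lab e' = lab e" by blast
  show "e' = e" by (rule lr[OF h(1) e h(2) h(3)])
qed

lemma test: "True" by simp

primrec Hs :: "(nat \<Rightarrow> 's) \<Rightarrow> (nat \<Rightarrow> 'v) \<Rightarrow> nat \<Rightarrow> nat \<Rightarrow> 'v" where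
  "Hs a D 0 j = D j"
| "Hs a D (Suc r) j = src (predE (a j) (Hs a D r (Suc j)))"

end


context lgs begin

lemma Hiota:
  assumes step: "\<And>r j. iota (H (Suc r) j) = H r j"
  shows "(iota ^^ k) (H (r + k) j) = H r j"
proof (induction k)
  case 0 then show ?case by simp
next
  case (Suc k)
  have "(iota ^^ Suc k) (H (r + Suc k) j) = (iota ^^ k) (iota (H (Suc (r + k)) j))"
    by (simp only: funpow_Suc_right o_apply add_Suc_right)
  also have "\<dots> = (iota ^^ k) (H (r + k) j)" by (simp only: step)
  finally show ?case using Suc.IH by (simp only:)
qed

lemma lift:
  assumes ed: "\<And>j. ed j \<in> E (M + j)" and ch: "\<And>j. trg (ed j) = src (ed (Suc j))"
  shows "\<exists>w. \<forall>j. w j \<in> Omega_L V iota \<and> w j (M + j) = src (ed j) \<and>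
      (w j, lab (ed j), w (Suc j)) \<in> E_L Alph V E src trg lab iota"
proof -
  define a where "a j = lab (ed j)" for j
  define S where "S j = {z \<in> V (M + j + j). (iota ^^ j) z = src (ed j)}" for j
  define f where "f j z = src (predE (a j) (iota z))" for j z
  have C: "\<exists>e'\<in>E (M+j+j). trg e' = iota z \<and> (iota ^^ j) (src e') = src (ed j) \<and> lab e' = a j"
    if z: "z \<in> S (Suc j)" for z j
  proof -
    have zV: "z \<in> V (M + Suc j + Suc j)" and zi: "(iota ^^ Suc j) z = src (ed (Suc j))"
      using z unfolding S_def by auto
    have "z \<in> V (Suc (Suc (M + j) + j))" using zV by simp
    then have it: "iota z \<in> V (Suc (M + j) + j)" by (rule iotaV)
    have "(iota ^^ j) (iota z) = trg (ed j)" using zi ch[of j]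
      by (simp only: funpow_Suc_right o_apply)
    from upk[OF ed[of j] it this] show ?thesis unfolding a_def by simp
  qed
  have fin: "finite (S j)" for j unfolding S_def using finV by simp
  have ne: "S j \<noteq> {}" for j
  proof -
    have "src (ed j) \<in> V (M + j)" using srcV[OF ed[of j]] .
    from iotak_surj[OF this, of j] obtain w where "w \<in> V (M + j + j)" "(iota ^^ j) w = src (ed j)" by blast
    then show ?thesis unfolding S_def by blast
  qed
  have fe: "f j z = src e'" if "z \<in> S (Suc j)" "e' \<in> E (M+j+j)" "trg e' = iota z" "lab e' = a j" for z j e'
    unfolding f_def using predE_eq[OF that(2)] that(3,4) by simp
  have maps: "f j z \<in> S j" if z: "z \<in> S (Suc j)" for j z
  proof -
    from C[OF z] obtain e' where e': "e' \<in> E (M+j+j)" "trg e' = iota z"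
      "(iota ^^ j) (src e') = src (ed j)" "lab e' = a j" by blast
    have "f j z = src e'" using fe[OF z e'(1,2,4)] .
    then show ?thesis unfolding S_def using srcV[OF e'(1)] e'(3) by simp
  qed
  from koenig[of S f, OF fin ne maps] obtain D where
    D: "\<And>j. D j \<in> S j" "\<And>j. f j (D (Suc j)) = D j" by blast
  define H where "H = Hs a D"
  have H0: "H 0 j = D j" for j unfolding H_def by simp
  have HS: "H (Suc r) j = src (predE (a j) (H r (Suc j)))" for r j unfolding H_def by simp
  have I: "\<forall>j. H r j \<in> V (M + j + j + r) \<and> predE (a j) (H r (Suc j)) \<in> E (Suc (M + j + j + r)) \<and>
      trg (predE (a j) (H r (Suc j))) = H r (Suc j) \<and> lab (predE (a j) (H r (Suc j))) = a j \<and>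
      iota (H (Suc r) j) = H r j" for r
  proof (induction r)
    case 0
    show ?case
    proof
      fix j
      have Dj: "D j \<in> V (M + j + j)" using D(1)[of j] unfolding S_def by simp
      from C[OF D(1)[of "Suc j"]] obtain e' where e': "e' \<in> E (M+j+j)" "trg e' = iota (D (Suc j))"
        "(iota ^^ j) (src e') = src (ed j)" "lab e' = a j" by blast
      have se': "src e' = D j" using fe[OF D(1)[of "Suc j"] e'(1,2,4)] D(2)[of j] by simp
      have t: "D (Suc j) \<in> V (Suc (Suc (M + j + j)))" using D(1)[of "Suc j"] unfolding S_def by simp
      from up1[OF e'(1) t e'(2)[symmetric]] obtain e2 where e2: "e2 \<in> E (Suc (M+j+j))"
        "trg e2 = D (Suc j)" "iota (src e2) = src e'" "lab e2 = lab e'" by blast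
      have pe: "predE (a j) (D (Suc j)) = e2" using predE_eq[OF e2(1)] e2(2,4) e'(4) by simp
      show "H 0 j \<in> V (M + j + j + 0) \<and> predE (a j) (H 0 (Suc j)) \<in> E (Suc (M + j + j + 0)) \<and>
        trg (predE (a j) (H 0 (Suc j))) = H 0 (Suc j) \<and> lab (predE (a j) (H 0 (Suc j))) = a j \<and>
        iota (H (Suc 0) j) = H 0 j"
        unfolding HS H0 pe using Dj e2 e' se' by simp
    qed
  next
    case (Suc r)
    show ?case
    proof
      fix j
      have Ij: "H r j \<in> V (M + j + j + r)" "predE (a j) (H r (Suc j)) \<in> E (Suc (M + j + j + r))"
        "trg (predE (a j) (H r (Suc j))) = H r (Suc j)" "lab (predE (a j) (H r (Suc j))) = a j"
        "iota (H (Suc r) j) = H r j" using Suc.IH by blast+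
      have Ij1: "predE (a (Suc j)) (H r (Suc (Suc j))) \<in> E (Suc (M + Suc j + Suc j + r))"
        "iota (H (Suc r) (Suc j)) = H r (Suc j)" using Suc.IH by blast+
      define e1 where "e1 = predE (a j) (H r (Suc j))"
      have hsr: "H (Suc r) j = src e1" unfolding e1_def HS ..
      have m1: "H (Suc r) j \<in> V (M + j + j + Suc r)" using srcV[OF Ij(2)] unfolding hsr e1_def by simp
      have tv: "H (Suc r) (Suc j) \<in> V (Suc (Suc (Suc (M + j + j + r))))"
        using srcV[OF Ij1(1)] unfolding HS[of r "Suc j"] by simp
      have ti: "iota (H (Suc r) (Suc j)) = trg e1" using Ij1(2) Ij(3) unfolding e1_def by simp
      from up1[OF Ij(2)[folded e1_def] tv ti] obtain e2 where e2: "e2 \<in> E (Suc (Suc (M + j + j + r)))"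
        "trg e2 = H (Suc r) (Suc j)" "iota (src e2) = src e1" "lab e2 = lab e1" by blast
      have pe: "predE (a j) (H (Suc r) (Suc j)) = e2" using predE_eq[OF e2(1)] e2(2,4) Ij(4)
        unfolding e1_def by simp
      show "H (Suc r) j \<in> V (M + j + j + Suc r) \<and> predE (a j) (H (Suc r) (Suc j)) \<in> E (Suc (M + j + j + Suc r)) \<and>
        trg (predE (a j) (H (Suc r) (Suc j))) = H (Suc r) (Suc j) \<and> lab (predE (a j) (H (Suc r) (Suc j))) = a j \<and>
        iota (H (Suc (Suc r)) j) = H (Suc r) j"
        unfolding pe HS[of "Suc r" j] using m1 e2 hsr Ij(4) unfolding e1_def by simp
    qed
  qed
  have Hstep: "iota (H (Suc r) j) = H r j" for r j using I by blast
  have HV: "H r j \<in> V (M + j + j + r)" for r j using I by blast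
  define w where "w j l = (iota ^^ (M + j + j)) (H l j)" for j l
  have wO: "w j \<in> Omega_L V iota" for j
  proof -
    have "w j l \<in> V l" for l
      unfolding w_def by (rule iotakV) (use HV[of l j] in \<open>simp add: add.commute\<close>)
    moreover have "iota (w j (Suc l)) = w j l" for l
      unfolding w_def by (simp only: funpow_swap1 Hstep)
    ultimately show ?thesis unfolding Omega_L_def by blast
  qed
  have wM: "w j (M + j) = src (ed j)" for j
  proof -
    have eq: "M + j + j = j + (M + j)" by simp
    have "w j (M + j) = (iota ^^ j) ((iota ^^ (M + j)) (H (0 + (M + j)) j))"
      unfolding w_def eq funpow_add o_apply by simp
    also have "\<dots> = (iota ^^ j) (D j)" using Hiota[of H, OF Hstep, of "M + j" 0 j] H0[of j] by simp
    also have "\<dots> = src (ed j)" using D(1)[of j] unfolding S_def by simp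
    finally show ?thesis .
  qed
  have wE: "(w j, lab (ed j), w (Suc j)) \<in> E_L Alph V E src trg lab iota" for j
  proof -
    have "\<exists>e\<in>E l. src e = w j l \<and> trg e = w (Suc j) (Suc l) \<and> lab e = a j" for l
    proof -
      have Il: "predE (a j) (H (Suc l) (Suc j)) \<in> E (Suc (M + j + j + Suc l))"
        "trg (predE (a j) (H (Suc l) (Suc j))) = H (Suc l) (Suc j)"
        "lab (predE (a j) (H (Suc l) (Suc j))) = a j" using I by blast+
      have ee: "predE (a j) (H (Suc l) (Suc j)) \<in> E (l + Suc (Suc (M + j + j)))"
        using Il(1) by (simp add: algebra_simps)
      from downk[OF ee] obtain e' where e': "e' \<in> E l"
        "src e' = (iota ^^ Suc (Suc (M + j + j))) (src (predE (a j) (H (Suc l) (Suc j))))"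
        "trg e' = (iota ^^ Suc (Suc (M + j + j))) (trg (predE (a j) (H (Suc l) (Suc j))))"
        "lab e' = lab (predE (a j) (H (Suc l) (Suc j)))" by blast
      have "src e' = (iota ^^ (M + j + j)) ((iota ^^ 2) (H (l + 2) j))"
    proof -
      have eq: "Suc (Suc (M + j + j)) = (M + j + j) + 2" by simp
      show ?thesis using e'(2) unfolding HS[symmetric] eq funpow_add o_apply by simp
    qed
      also have "\<dots> = w j l" unfolding w_def using Hiota[of H, OF Hstep, of 2 l j] by simp
      finally have s: "src e' = w j l" .
      have t: "trg e' = w (Suc j) (Suc l)" using e'(3) Il(2) unfolding w_def
        by (simp del: funpow.simps)
      show ?thesis using e'(1) s t e'(4) Il(3) by auto
    qed
    moreover have "a j \<in> Alph" unfolding a_def using labA[OF ed[of j]] .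
    ultimately show ?thesis unfolding E_L_def using wO a_def by simp
  qed
  show ?thesis using wO wM wE by blast
qed

end


lemma sigma_pow: "(sigma_L ^^ k) x = (\<lambda>i. x (i + k))"
  by (induction k) (auto simp: sigma_L_def)

lemma per_det:
  assumes "m < (n::nat)" "\<And>i. z (i + m) = z (i + n)" "\<And>i. z' (i + m) = z' (i + n)"
    "\<And>i. i < n \<Longrightarrow> g (z i) = g (z' i)"
  shows "g (z i) = g (z' i)"
proof (induction i rule: less_induct)
  case (less i)
  show ?case
  proof (cases "i < n")
    case True then show ?thesis using assms(4) by blast
  next
    case False
    then have i: "i = (i - n) + n" by simp
    have lt: "(i - n) + m < i" using False assms(1) by simp
    have "z i = z ((i - n) + m)" using assms(2)[of "i - n"] i by simp
    moreover have "z' i = z' ((i - n) + m)" using assms(3)[of "i - n"] i by simp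
    ultimately show ?thesis using less.IH[OF lt] by simp
  qed
qed

lemma omega_agree:
  assumes "u \<in> Omega_L V iota" "u' \<in> Omega_L V iota" "u L = u' L" "l \<le> L"
  shows "u l = u' l"
  using assms(3,4)
proof (induction L)
  case 0 then show ?case by simp
next
  case (Suc L)
  show ?case
  proof (cases "l = Suc L")
    case True then show ?thesis using Suc.prems by simp
  next
    case False
    have "u L = iota (u (Suc L))" using assms(1) unfolding Omega_L_def by simp
    also have "\<dots> = iota (u' (Suc L))" using Suc.prems by simp
    also have "\<dots> = u' L" using assms(2) unfolding Omega_L_def by simp
    finally show ?thesis using Suc.IH False Suc.prems by simp
  qed
qed

lemma topO: "topspace (Omega_top V iota) = Omega_L V iota"
  unfolding Omega_top_def by (auto simp: Omega_L_def PiE_iff)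

context lgs begin

lemma main_lt:
  assumes CI: "condition_I V E src trg lab" and mn: "m < n"
  shows "(X_top Alph V E src trg lab iota) interior_of (X_mn Alph V E src trg lab iota m n) = {}"
proof (rule ccontr)
  let ?XT = "X_top Alph V E src trg lab iota"
  let ?XL = "X_L Alph V E src trg lab iota"
  let ?XM = "X_mn Alph V E src trg lab iota m n"
  let ?EL = "E_L Alph V E src trg lab iota"
  assume "?XT interior_of ?XM \<noteq> {}"
  then obtain x where xi: "x \<in> ?XT interior_of ?XM" by blast
  have xM: "x \<in> ?XM" using subsetD[OF interior_of_subset xi] .
  then have xL: "x \<in> ?XL" and xper0: "(sigma_L ^^ m) x = (sigma_L ^^ n) x" unfolding X_mn_def by auto
  have xper: "x (i + m) = x (i + n)" for i using fun_cong[OF xper0, of i] unfolding sigma_pow by simp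
  define u where "u k = snd (x k)" for k
  define \<alpha> where "\<alpha> k = fst (x k)" for k
  have uO: "u k \<in> Omega_L V iota" and \<alpha>A: "\<alpha> k \<in> Alph" for k
    using xL unfolding X_L_def u_def \<alpha>_def by auto
  have xch: "(u k, \<alpha> (Suc k), u (Suc k)) \<in> ?EL" for k using xL unfolding X_L_def u_def \<alpha>_def by auto
  obtain u0 where u0: "u0 \<in> Omega_L V iota" "(u0, \<alpha> 0, u 0) \<in> ?EL"
    using xL unfolding X_L_def u_def \<alpha>_def by auto
  define prev where "prev j = (if j = 0 then u0 else u (j - 1))" for j
  have xedge: "\<exists>e\<in>E l. src e = prev j l \<and> trg e = u j (Suc l) \<and> lab e = \<alpha> j" for j l
  proof (cases j)
    case 0 then show ?thesis using u0(2) unfolding prev_def E_L_def by auto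
  next
    case (Suc j') then show ?thesis using xch[of j'] unfolding prev_def E_L_def by auto
  qed
  have construct: "\<exists>y. y \<in> ?XL \<and> (\<forall>k<Suc N. fst (y k) = fst (x k) \<and> (\<forall>l\<le>Suc N. snd (y k) l = snd (x k) l))
      \<and> (\<exists>j. fst (y (Suc N + j)) \<noteq> fst (x (Suc N + j)))" for N
  proof -
    define K where "K = Suc N"
    define v where "v = u N (K + K)"
    have vV: "v \<in> V (K + K)" using uO[of N] unfolding v_def Omega_L_def by simp
    obtain a b where ab: "a \<in> Gamma_plus_infty E src trg lab (K + K) v"
      "b \<in> Gamma_plus_infty E src trg lab (K + K) v" "a \<noteq> b"
      using CI vV unfolding condition_I_def by blast
    obtain d where d: "d \<in> Gamma_plus_infty E src trg lab (K + K) v" "d \<noteq> (\<lambda>j. \<alpha> (K + j))"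
      using ab by metis
    then obtain p where p: "\<And>i. p i \<in> E (K + K + i)" "src (p 0) = v"
      "\<And>i. trg (p i) = src (p (Suc i))" "\<And>i. lab (p i) = d i"
      unfolding Gamma_plus_infty_def by blast
    define ed where "ed j = (if j < K then (SOME e. e \<in> E (K + j) \<and> src e = prev j (K + j) \<and>
        trg e = u j (Suc (K + j)) \<and> lab e = \<alpha> j) else p (j - K))" for j
    have edlt: "ed j \<in> E (K + j) \<and> src (ed j) = prev j (K + j) \<and> trg (ed j) = u j (Suc (K + j)) \<and> lab (ed j) = \<alpha> j"
      if "j < K" for j
    proof -
      have "\<exists>e. e \<in> E (K + j) \<and> src e = prev j (K + j) \<and> trg e = u j (Suc (K + j)) \<and> lab e = \<alpha> j"
        using xedge[of "K + j" j] by blast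
      from someI_ex[OF this] show ?thesis unfolding ed_def using that by simp
    qed
    have edge: "ed j = p (j - K)" if "\<not> j < K" for j unfolding ed_def using that by simp
    have edE: "ed j \<in> E (K + j)" for j
    proof (cases "j < K")
      case True then show ?thesis using edlt by blast
    next
      case False
      have "K + K + (j - K) = K + j" using False by simp
      then show ?thesis using p(1)[of "j - K"] edge[OF False] by simp
    qed
    have srcS: "src (ed (Suc k)) = u k (K + Suc k)" if "k < K" for k
    proof (cases "Suc k < K")
      case True then show ?thesis using edlt[OF True] unfolding prev_def by simp
    next
      case False
      then have kN: "k = N" using that unfolding K_def by simp
      have "ed (Suc k) = p 0" using edge[OF False] kN unfolding K_def by simp
      then show ?thesis using p(2) kN unfolding v_def K_def by simp
    qed
    have edch: "trg (ed j) = src (ed (Suc j))" for j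
    proof (cases "j < K")
      case True
      then show ?thesis using edlt[OF True] srcS[OF True] by simp
    next
      case False
      then have "Suc j - K = Suc (j - K)" by simp
      then show ?thesis using edge[OF False] edge[of "Suc j"] False p(3)[of "j - K"] by simp
    qed
    from lift[of ed K, OF edE edch] obtain w where w: "\<And>j. w j \<in> Omega_L V iota"
      "\<And>j. w j (K + j) = src (ed j)" "\<And>j. (w j, lab (ed j), w (Suc j)) \<in> ?EL" by blast
    define y where "y k = (lab (ed k), w (Suc k))" for k
    have yL: "y \<in> ?XL"
      unfolding X_L_def y_def using w labA[OF edE] by auto
    have agree: "fst (y k) = fst (x k) \<and> (\<forall>l\<le>Suc N. snd (y k) l = snd (x k) l)" if "k < Suc N" for k
    proof -
      have kK: "k < K" using that unfolding K_def .
      have "fst (y k) = fst (x k)" using edlt[OF kK] unfolding y_def \<alpha>_def by simp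
      moreover have "snd (y k) (K + Suc k) = snd (x k) (K + Suc k)"
        using w(2)[of "Suc k"] srcS[OF kK] unfolding y_def u_def by simp
      then have "snd (y k) l = snd (x k) l" if "l \<le> Suc N" for l
        using omega_agree[OF w(1)[of "Suc k"] uO[of k]] that unfolding y_def u_def K_def by simp
      ultimately show ?thesis by blast
    qed
    have diff: "\<exists>j. fst (y (Suc N + j)) \<noteq> fst (x (Suc N + j))"
    proof -
      obtain j where "d j \<noteq> \<alpha> (K + j)" using d(2) by blast
      moreover have "fst (y (K + j)) = d j" using edge[of "K + j"] p(4)[of j] unfolding y_def by simp
      ultimately show ?thesis unfolding \<alpha>_def K_def by metis
    qed
    show ?thesis using yL agree diff by blast
  qed
  then obtain Y where Y: "\<And>N. Y N \<in> ?XL" "\<And>N k. k < Suc N \<Longrightarrow> fst (Y N k) = fst (x k)"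
    "\<And>N k l. k < Suc N \<Longrightarrow> l \<le> Suc N \<Longrightarrow> snd (Y N k) l = snd (x k) l"
    "\<And>N. \<exists>j. fst (Y N (Suc N + j)) \<noteq> fst (x (Suc N + j))"
    by metis
  have YO: "snd (Y N k) \<in> Omega_L V iota" "fst (Y N k) \<in> Alph" for N k
    using Y(1)[of N] unfolding X_L_def by auto
  have lim: "limitin ?XT Y x sequentially"
    unfolding X_top_def limitin_subtopology limitin_componentwise
  proof (intro conjI ballI)
    show "x \<in> ?XL" by (rule xL)
    show "\<forall>\<^sub>F a in sequentially. Y a \<in> ?XL" using Y(1) by simp
    show "x \<in> extensional UNIV" by simp
    show "\<forall>\<^sub>F a in sequentially. Y a \<in> topspace (product_topology (\<lambda>k. prod_topology (discrete_topology Alph) (Omega_top V iota)) UNIV)"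
    proof (rule always_eventually, rule allI)
      fix N
      have "Y N k \<in> Alph \<times> Omega_L V iota" for k using YO[of N k] by (simp add: mem_Times_iff)
      then show "Y N \<in> topspace (product_topology (\<lambda>k. prod_topology (discrete_topology Alph) (Omega_top V iota)) UNIV)"
        by (simp add: topO PiE_iff)
    qed
    fix k :: nat
    show "limitin (prod_topology (discrete_topology Alph) (Omega_top V iota)) (\<lambda>c. Y c k) (x k) sequentially"
      unfolding limitin_pairwise
    proof
      show "limitin (discrete_topology Alph) (fst \<circ> (\<lambda>c. Y c k)) (fst (x k)) sequentially"
      proof (rule limitin_eventually)
        show "fst (x k) \<in> topspace (discrete_topology Alph)" using \<alpha>A unfolding \<alpha>_def by simp
        show "\<forall>\<^sub>F c in sequentially. (fst \<circ> (\<lambda>c. Y c k)) c = fst (x k)"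
          unfolding eventually_sequentially using Y(2) by (intro exI[of _ k]) simp
      qed
      show "limitin (Omega_top V iota) (snd \<circ> (\<lambda>c. Y c k)) (snd (x k)) sequentially"
        unfolding Omega_top_def limitin_subtopology limitin_componentwise
      proof (intro conjI ballI)
        show "snd (x k) \<in> Omega_L V iota" using uO unfolding u_def by simp
        show "\<forall>\<^sub>F c in sequentially. (snd \<circ> (\<lambda>c. Y c k)) c \<in> Omega_L V iota" using YO by simp
        show "snd (x k) \<in> extensional UNIV" by simp
        show "\<forall>\<^sub>F c in sequentially. (snd \<circ> (\<lambda>c. Y c k)) c \<in> topspace (product_topology (\<lambda>l. discrete_topology (V l)) UNIV)"
          using YO by (simp add: Omega_L_def PiE_iff)
        fix l :: nat
        show "limitin (discrete_topology (V l)) (\<lambda>c. (snd \<circ> (\<lambda>c. Y c k)) c l) (snd (x k) l) sequentially"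
        proof (rule limitin_eventually)
          show "snd (x k) l \<in> topspace (discrete_topology (V l))" using uO[of k] unfolding u_def Omega_L_def by simp
          show "\<forall>\<^sub>F c in sequentially. (snd \<circ> (\<lambda>c. Y c k)) c l = snd (x k) l"
            unfolding eventually_sequentially using Y(3) by (intro exI[of _ "k + l"]) simp
        qed
      qed
    qed
  qed
  have "\<forall>\<^sub>F N in sequentially. Y N \<in> ?XT interior_of ?XM"
    using lim xi openin_interior_of unfolding limitin_def by blast
  then obtain N0 where N0: "\<And>N. N \<ge> N0 \<Longrightarrow> Y N \<in> ?XT interior_of ?XM" unfolding eventually_sequentially by blast
  define N where "N = max N0 n"
  have "Y N \<in> ?XT interior_of ?XM" using N0[of N] unfolding N_def by simp
  then have "Y N \<in> ?XM" by (rule subsetD[OF interior_of_subset])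
  then have yper0: "(sigma_L ^^ m) (Y N) = (sigma_L ^^ n) (Y N)" unfolding X_mn_def by auto
  have yper: "Y N (i + m) = Y N (i + n)" for i using fun_cong[OF yper0, of i] unfolding sigma_pow by simp
  have same: "fst (Y N i) = fst (x i)" for i
  proof (rule per_det[OF mn, of "Y N" x fst])
    show "Y N (i + m) = Y N (i + n)" for i by (rule yper)
    show "x (i + m) = x (i + n)" for i by (rule xper)
    show "fst (Y N i) = fst (x i)" if "i < n" for i using Y(2)[of i N] that unfolding N_def by simp
  qed
  then show False using Y(4)[of N] by simp
qed

end

lemma X_mn_sym: "X_mn Alph V E src trg lab iota m n = X_mn Alph V E src trg lab iota n m"
  unfolding X_mn_def by auto

theorem mainTheorem1:
  fixes Alph :: "'s set" and V :: "nat \<Rightarrow> 'v set" and E :: "nat \<Rightarrow> 'e set"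
    and src trg :: "'e \<Rightarrow> 'v" and lab :: "'e \<Rightarrow> 's" and iota :: "'v \<Rightarrow> 'v"
  assumes "lambda_graph_system Alph V E src trg lab iota"
    and "left_resolving E trg lab"
    and "condition_I V E src trg lab"
  shows "essentially_free Alph V E src trg lab iota"
proof -
  interpret lgs Alph V E src trg lab iota using assms(1,2) by unfold_locales
  show ?thesis
    unfolding essentially_free_def
  proof (intro allI impI)
    fix m n :: nat
    assume "m \<noteq> n"
    then consider "m < n" | "n < m" by linarith
    then show "X_top Alph V E src trg lab iota interior_of X_mn Alph V E src trg lab iota m n = {}"
    proof cases
      case 1 then show ?thesis using main_lt[OF assms(3)] by blast
    next
      case 2 then show ?thesis using main_lt[OF assms(3) 2] X_mn_sym by metis
    qed
  qed
qed

end
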